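(* Let $S\subset\mathbb{R}^d$ be a compact set and, for each $n$, let $\mathcal{X}_n=\{X_1,\dots,X_n\}$ be an $\mathcal{AI}(\alpha_n)$ sample of points whose common marginal distribution $P_X$ has support $S$, where $S$ is standard with respect to $P_X$ with constants $\delta$ and $\lambda$, and where $\alpha_n$ satisfies $\sum_{n=1}^{+\infty}\frac{\alpha_n}{n^\beta\log n}<+\infty$ for any $\beta>1$. Then $$\limsup_{n\to\infty}\left(\frac{n}{\log n}\right)^{1/d}d_H(\mathcal{X}_n,S)\leq\left(\frac{2}{\delta\omega_d}\right)^{1/d}\quad\text{a.s.}$$
   Context: $d_H(S_1,S_2)=\max\{\sup_{x\in S_1}\inf_{y\in S_2}\|x-y\|,\sup_{y\in S_2}\inf_{x\in S_1}\|x-y\|\}$ is the Hausdorff distance. $\omega_d$ is the Lebesgue measure $\mu_d$ of the unit ball in $\mathbb{R}^d$. $\mathcal{AI}(\alpha_n)$: random vectors $X_1,\dots,X_n$ with joint density $f_{(X_1,\dots,X_n)}$ and marginal densities $f_{X_i}$ satisfy $\sup_{x}\left|\frac{f_{(X_1,\dots,X_n)}(x)-f_{X_1}(x_1)\cdots f_{X_n}(x_n)}{f_{X_1}(x_1)\cdots f_{X_n}(x_n)}\right|\leq\alpha_n$. $S$ is standard with constants $\delta,\lambda$ w.r.t. $\nu$ if for all $x\in S$ and $0<\varepsilon\le\lambda$, $\nu(B(x,\varepsilon)\cap S)\geq\delta\mu_d(B(x,\varepsilon))$. *)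

theory Defs
  imports "HOL-Analysis.Analysis" "HOL-Probability.Probability"
begin

definition hausdorff_dist :: "'a::metric_space set \<Rightarrow> 'a set \<Rightarrow> real" where
  "hausdorff_dist A B = max (SUP x\<in>A. infdist x B) (SUP y\<in>B. infdist y A)"

definition unit_ball_vol :: "'a::euclidean_space itself \<Rightarrow> real" where
  "unit_ball_vol _ = measure lborel (ball (0::'a) 1)"

definition measure_support :: "'a::metric_space measure \<Rightarrow> 'a set" where
  "measure_support P = {x. \<forall>e>0. emeasure P (ball x e) > 0}"

definition standard_set :: "'a::euclidean_space set \<Rightarrow> 'a measure \<Rightarrow> real \<Rightarrow> real \<Rightarrow> bool" where
  "standard_set S \<nu> \<delta> lam \<longleftrightarrow>
     (\<forall>x\<in>S. \<forall>\<epsilon>. 0 < \<epsilon> \<and> \<epsilon> \<le> lam \<longrightarrow>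
        measure \<nu> (ball x \<epsilon> \<inter> S) \<ge> \<delta> * measure lborel (ball x \<epsilon>))"

text \<open>The AI(alpha) condition for a joint density g of (X_1,...,X_n) (on functions with
  domain {1..n}) and common marginal density f:
  sup_x |g(x) - prod f(x_i)| / prod f(x_i) <= alpha, where the ratio is read as +infinity
  when the product vanishes but g does not (and as 0 when both vanish).\<close>
definition AI_cond :: "nat \<Rightarrow> ((nat \<Rightarrow> 'a) \<Rightarrow> real) \<Rightarrow> ('a \<Rightarrow> real) \<Rightarrow> real \<Rightarrow> bool" where
  "AI_cond n g f \<alpha> \<longleftrightarrow>
     (\<forall>x\<in>extensional {1..n}.
        let p = (\<Prod>i\<in>{1..n}. f (x i)) in
          (p > 0 \<longrightarrow> \<bar>g x - p\<bar> / p \<le> \<alpha>) \<and> (p = 0 \<longrightarrow> g x = 0))"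

end

theory Submission
  imports Defs "HOL-Real_Asymp.Real_Asymp"
begin


lemma support_AE:
  fixes Q :: "'a::euclidean_space measure"
  assumes sQ: "sets Q = sets borel"
  shows "AE x in Q. x \<in> measure_support Q"
proof -
  define F where "F = {ball x e | x e. e > 0 \<and> emeasure Q (ball x e) = 0}"
  obtain F' where F': "F' \<subseteq> F" "countable F'" "\<Union>F' = \<Union>F"
    using Lindelof[of F] unfolding F_def by blast
  have "(\<Union>B\<in>F'. B) \<in> null_sets Q"
  proof (rule null_sets_UN'[OF F'(2)])
    fix B assume "B \<in> F'"
    then obtain x e where "B = ball x e" "emeasure Q (ball x e) = 0" using F'(1) F_def by blast
    then show "B \<in> null_sets Q" using sQ by (auto simp: null_sets_def)
  qed
  moreover have "{x \<in> space Q. \<not> x \<in> measure_support Q} \<subseteq> (\<Union>B\<in>F'. B)"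
  proof
    fix x assume "x \<in> {x \<in> space Q. \<not> x \<in> measure_support Q}"
    then obtain e where "e > 0" "\<not> emeasure Q (ball x e) > 0" unfolding measure_support_def by auto
    then have "ball x e \<in> F" unfolding F_def by (auto simp: not_gr_zero)
    then have "x \<in> \<Union>F" using \<open>e > 0\<close> by (meson centre_in_ball UnionI)
    then show "x \<in> (\<Union>B\<in>F'. B)" using F'(3) by auto
  qed
  ultimately show ?thesis by (rule AE_I')
qed

lemma fm_ball: "ball (c::'a::euclidean_space) r \<in> fmeasurable lborel"
proof -
  have "emeasure lborel (ball c r) < \<infinity>" by (rule emeasure_lborel_ball_finite)
  moreover have "ball c r \<in> sets lborel" unfolding sets_lborel by (rule borel_open[OF open_ball])
  ultimately show ?thesis unfolding fmeasurable_def by blast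
qed

lemma packing_bound:
  fixes F :: "'a::euclidean_space set"
  assumes "finite F" "F \<subseteq> cball 0 R" "0 < \<rho>" "\<rho> \<le> 2" "R \<ge> 0"
    and sep: "\<And>x y. x \<in> F \<Longrightarrow> y \<in> F \<Longrightarrow> x \<noteq> y \<Longrightarrow> dist x y \<ge> \<rho>"
  shows "real (card F) * (\<rho>/2) ^ DIM('a) \<le> (R+1) ^ DIM('a)"
proof -
  let ?w = "measure lborel (ball (0::'a) 1)"
  have w: "?w > 0" by (rule content_ball_pos) simp
  have R: "R \<ge> 0" by (rule assms(5))
  have "measure lborel (\<Union>x\<in>F. ball x (\<rho>/2)) = (\<Sum>x\<in>F. measure lborel (ball x (\<rho>/2)))"
  proof (rule measure_UNION')
    show "pairwise (\<lambda>i j. disjnt (ball i (\<rho> / 2)) (ball j (\<rho> / 2))) F"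
      unfolding pairwise_def disjnt_def
    proof (intro ballI impI)
      fix x y assume "x \<in> F" "y \<in> F" "x \<noteq> y"
      then have "dist x y \<ge> \<rho>" using sep by auto
      then show "ball x (\<rho> / 2) \<inter> ball y (\<rho> / 2) = {}"
        by (intro disjoint_ballI) simp
    qed
  qed (simp_all add: fm_ball assms(1))
  also have "\<dots> = real (card F) * ((\<rho>/2) ^ DIM('a) * ?w)"
  proof -
    have "measure lborel (ball x (\<rho>/2)) = (\<rho>/2) ^ DIM('a) * ?w" for x :: 'a
    proof -
      have "\<rho>/2 \<ge> 0" using assms(3) by simp
      from content_ball_conv_unit_ball[OF this, of x] show ?thesis .
    qed
    then show ?thesis by simp
  qed
  finally have eq: "measure lborel (\<Union>x\<in>F. ball x (\<rho>/2)) = real (card F) * ((\<rho>/2) ^ DIM('a) * ?w)" .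
  show ?thesis
  proof (cases "F = {}")
    case True then show ?thesis using R by (simp add: zero_le_power)
  next
    case False
    have sub: "(\<Union>x\<in>F. ball x (\<rho>/2)) \<subseteq> ball 0 (R+1)"
    proof
      fix y assume "y \<in> (\<Union>x\<in>F. ball x (\<rho>/2))"
      then obtain x where "x \<in> F" "dist x y < \<rho>/2" by auto
      moreover have "norm x \<le> R" using \<open>x \<in> F\<close> assms(2) by auto
      moreover have "norm y \<le> norm x + dist x y"
        by (metis dist_0_norm dist_commute dist_triangle)
      ultimately show "y \<in> ball 0 (R+1)" using assms(4) by simp
    qed
    have "measure lborel (\<Union>x\<in>F. ball x (\<rho>/2)) \<le> measure lborel (ball (0::'a) (R+1))"
      by (rule measure_mono_fmeasurable[OF sub fmeasurableD[OF fmeasurable.finite_UN[OF assms(1) fm_ball]] fm_ball])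
    also have "\<dots> = (R+1) ^ DIM('a) * ?w" using content_ball_conv_unit_ball[of "R+1" "0::'a"] R by simp
    finally have "real (card F) * (\<rho>/2) ^ DIM('a) * ?w \<le> (R+1) ^ DIM('a) * ?w" using eq by simp
    then show ?thesis using w by simp
  qed
qed


lemma covering:
  fixes S :: "'a::euclidean_space set"
  assumes SR: "S \<subseteq> cball 0 R" and R: "R \<ge> 0" and rho: "0 < \<rho>" "\<rho> \<le> 2"
  shows "\<exists>C. finite C \<and> C \<subseteq> S \<and> S \<subseteq> (\<Union>c\<in>C. ball c \<rho>) \<and>
           real (card C) * (\<rho>/2) ^ DIM('a) \<le> (R+1) ^ DIM('a)"
proof -
  define Q where "Q F \<longleftrightarrow> finite F \<and> F \<subseteq> S \<and> (\<forall>x\<in>F. \<forall>y\<in>F. x \<noteq> y \<longrightarrow> dist x y \<ge> \<rho>)" for F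
  define B where "B = (R+1) ^ DIM('a) / (\<rho>/2) ^ DIM('a)"
  define b where "b = nat \<lceil>B\<rceil> + 1"
  have pk: "real (card F) * (\<rho>/2) ^ DIM('a) \<le> (R+1) ^ DIM('a)" if "Q F" for F
    using that SR R rho unfolding Q_def by (intro packing_bound) auto
  have bnd: "card F < b" if "Q F" for F
  proof -
    have q: "(\<rho>/2) ^ DIM('a) > 0" using rho by simp
    have "real (card F) \<le> B" unfolding B_def using pk[OF that] q by (simp add: pos_le_divide_eq)
    then have "real (card F) \<le> real (nat \<lceil>B\<rceil>)" by linarith
    then show ?thesis unfolding b_def by linarith
  qed
  have "Q {}" unfolding Q_def by simp
  then obtain F where QF: "Q F" and mx: "\<forall>G. Q G \<longrightarrow> card G \<le> card F"
    using ex_has_greatest_nat[of Q "{}" card b] bnd by blast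
  have cov: "S \<subseteq> (\<Union>c\<in>F. ball c \<rho>)"
  proof
    fix x assume xS: "x \<in> S"
    show "x \<in> (\<Union>c\<in>F. ball c \<rho>)"
    proof (rule ccontr)
      assume "x \<notin> (\<Union>c\<in>F. ball c \<rho>)"
      then have far: "\<forall>c\<in>F. dist c x \<ge> \<rho>" by (auto simp: not_less)
      then have xF: "x \<notin> F" using rho by fastforce
      have "Q (insert x F)" using QF far xS unfolding Q_def by (auto simp: dist_commute)
      then have "card (insert x F) \<le> card F" using mx by blast
      moreover have "card (insert x F) = card F + 1" using xF QF unfolding Q_def by simp
      ultimately show False by simp
    qed
  qed
  show ?thesis using QF cov pk[OF QF] unfolding Q_def by blast
qed


lemma AI_pointwise:
  assumes AI: "AI_cond n g f a" and f0: "\<And>x. f x \<ge> 0" and x: "x \<in> extensional {1..n}"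
  shows "g x \<le> (1+a) * (\<Prod>i\<in>{1..n}. f (x i))"
proof -
  define p where "p = (\<Prod>i\<in>{1..n}. f (x i))"
  have p0: "p \<ge> 0" unfolding p_def using f0 by (simp add: prod_nonneg)
  have h: "(p > 0 \<longrightarrow> \<bar>g x - p\<bar> / p \<le> a) \<and> (p = 0 \<longrightarrow> g x = 0)"
    using AI x unfolding AI_cond_def p_def Let_def by blast
  show ?thesis
  proof (cases "p = 0")
    case True
    then have "g x = 0" using h by simp
    then show ?thesis using True unfolding p_def[symmetric] by simp
  next
    case False
    then have pp: "p > 0" using p0 by simp
    then have "\<bar>g x - p\<bar> \<le> a * p" using h by (simp add: divide_le_eq)
    then have "g x \<le> p + a * p" by linarith
    then show ?thesis unfolding p_def[symmetric] by (simp add: algebra_simps)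
  qed
qed

lemma joint_bound:
  fixes X :: "nat \<Rightarrow> 's \<Rightarrow> 'a::euclidean_space"
  assumes M: "prob_space M" and f0: "\<And>x. f x \<ge> 0"
    and marg: "distributed M lborel (X 1) (\<lambda>x. ennreal (f x))"
    and joint: "distributed M (PiM {1..n} (\<lambda>_. lborel)) (\<lambda>\<omega>. \<lambda>i\<in>{1..n}. X i \<omega>) (\<lambda>x. ennreal (g x))"
    and AI: "AI_cond n g f a"
    and B: "B \<in> sets borel" and a: "1 + a \<ge> 0"
  shows "emeasure M {\<omega>\<in>space M. \<forall>i\<in>{1..n}. X i \<omega> \<notin> B}
          \<le> ennreal ((1+a) * (1 - measure (density lborel f) B) ^ n)"
proof -
  interpret product_sigma_finite "\<lambda>_::nat. lborel :: 'a measure"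
    by (intro product_sigma_finite.intro) (rule sigma_finite_lborel)
  let ?E = "PiE {1..n} (\<lambda>_. -B)"
  let ?P = "PiM {1..n} (\<lambda>_. lborel :: 'a measure)"
  have fm: "(\<lambda>x. ennreal (f x)) \<in> borel_measurable lborel"
    using distributed_borel_measurable[OF marg] .
  have cB: "-B \<in> sets lborel" using B by simp
  have Esets: "?E \<in> sets ?P"
    by (rule sets_PiM_I_finite) (use cB in auto)
  have seteq: "{\<omega>\<in>space M. \<forall>i\<in>{1..n}. X i \<omega> \<notin> B} = (\<lambda>\<omega>. \<lambda>i\<in>{1..n}. X i \<omega>) -` ?E \<inter> space M"
    by (auto simp: restrict_PiE_iff Pi_def)
  have "emeasure M {\<omega>\<in>space M. \<forall>i\<in>{1..n}. X i \<omega> \<notin> B} = (\<integral>\<^sup>+x. ennreal (g x) * indicator ?E x \<partial>?P)"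
    unfolding seteq by (rule distributed_emeasure[OF joint Esets])
  also have "\<dots> \<le> (\<integral>\<^sup>+x. ennreal (1+a) * (\<Prod>i\<in>{1..n}. ennreal (f (x i)) * indicator (-B) (x i)) \<partial>?P)"
  proof (rule nn_integral_mono)
    fix x assume "x \<in> space ?P"
    then have xe: "x \<in> extensional {1..n}" by (simp add: space_PiM PiE_def)
    show "ennreal (g x) * indicator ?E x \<le> ennreal (1+a) * (\<Prod>i\<in>{1..n}. ennreal (f (x i)) * indicator (-B) (x i))"
    proof (cases "x \<in> ?E")
      case True
      then have "\<forall>i\<in>{1..n}. x i \<in> -B" by (auto simp: PiE_def Pi_def)
      then have "(\<Prod>i\<in>{1..n}. ennreal (f (x i)) * indicator (-B) (x i)) = (\<Prod>i\<in>{1..n}. ennreal (f (x i)))"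
        by (intro prod.cong) auto
      also have "\<dots> = ennreal (\<Prod>i\<in>{1..n}. f (x i))" using f0 by (simp add: prod_ennreal)
      finally have pe: "(\<Prod>i\<in>{1..n}. ennreal (f (x i)) * indicator (-B) (x i)) = ennreal (\<Prod>i\<in>{1..n}. f (x i))" .
      have "g x \<le> (1+a) * (\<Prod>i\<in>{1..n}. f (x i))" by (rule AI_pointwise[OF AI f0 xe])
      then have "ennreal (g x) \<le> ennreal ((1+a) * (\<Prod>i\<in>{1..n}. f (x i)))" by (rule ennreal_leI)
      also have "\<dots> = ennreal (1+a) * ennreal (\<Prod>i\<in>{1..n}. f (x i))"
        using a f0 by (simp add: ennreal_mult prod_nonneg)
      finally show ?thesis using True pe by simp
    qed simp
  qed
  also have "\<dots> = ennreal (1+a) * (\<integral>\<^sup>+x. (\<Prod>i\<in>{1..n}. ennreal (f (x i)) * indicator (-B) (x i)) \<partial>?P)"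
    by (rule nn_integral_cmult) (use cB fm in measurable)
  also have "(\<integral>\<^sup>+x. (\<Prod>i\<in>{1..n}. ennreal (f (x i)) * indicator (-B) (x i)) \<partial>?P)
      = (\<Prod>i\<in>{1..n}. (\<integral>\<^sup>+y. ennreal (f y) * indicator (-B) y \<partial>lborel))"
    by (rule product_nn_integral_prod) (use cB fm in auto)
  also have "(\<integral>\<^sup>+y. ennreal (f y) * indicator (-B) y \<partial>lborel) = emeasure (density lborel f) (-B)"
    using cB fm by (simp add: emeasure_density)
  also have "density lborel f = distr M lborel (X 1)"
    using distributed_distr_eq_density[OF marg] by simp
  finally have 1: "emeasure M {\<omega>\<in>space M. \<forall>i\<in>{1..n}. X i \<omega> \<notin> B}
      \<le> ennreal (1+a) * emeasure (distr M lborel (X 1)) (-B) ^ n" by simp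
  interpret P: prob_space "distr M lborel (X 1)"
    using prob_space.prob_space_distr[OF M distributed_measurable[OF marg]] .
  have "emeasure (distr M lborel (X 1)) (-B) = ennreal (1 - measure (distr M lborel (X 1)) B)"
  proof -
    have "-B = space (distr M lborel (X 1)) - B" by auto
    then show ?thesis using P.prob_compl[of B] B P.emeasure_eq_measure by simp
  qed
  moreover have "density lborel f = distr M lborel (X 1)"
    using distributed_distr_eq_density[OF marg] by simp
  ultimately show ?thesis using 1 a P.prob_le_1[of B]
    by (simp add: ennreal_mult ennreal_power[symmetric])
qed


lemma hd_bound:
  fixes x :: "nat \<Rightarrow> 'a::euclidean_space"
  assumes xS: "\<forall>i\<in>{1..n}. x i \<in> S" and n: "n \<ge> 1" and Sne: "S \<noteq> {}"
    and cov: "S \<subseteq> (\<Union>z\<in>C. ball z \<rho>)"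
    and hit: "\<forall>z\<in>C. \<exists>i\<in>{1..n}. x i \<in> ball z r"
    and r: "r \<ge> 0" "\<rho> \<ge> 0"
  shows "hausdorff_dist (x ` {1..n}) S \<le> r + \<rho>"
proof -
  have ne: "x ` {1..n} \<noteq> {}" using n by auto
  have 1: "(SUP y\<in>x ` {1..n}. infdist y S) \<le> r + \<rho>"
  proof (rule cSUP_least[OF ne])
    fix y assume "y \<in> x ` {1..n}"
    then have "y \<in> S" using xS by auto
    then show "infdist y S \<le> r + \<rho>" using r by (simp add: infdist_zero)
  qed
  have 2: "(SUP y\<in>S. infdist y (x ` {1..n})) \<le> r + \<rho>"
  proof (rule cSUP_least[OF Sne])
    fix y assume "y \<in> S"
    then obtain z where z: "z \<in> C" "dist z y < \<rho>" using cov by auto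
    then obtain i where i: "i \<in> {1..n}" "dist z (x i) < r" using hit by auto
    have "infdist y (x ` {1..n}) \<le> dist y (x i)" using i by (intro infdist_le) auto
    also have "\<dots> \<le> dist y z + dist z (x i)" by (rule dist_triangle)
    also have "\<dots> \<le> r + \<rho>" using z i by (simp add: dist_commute)
    finally show "infdist y (x ` {1..n}) \<le> r + \<rho>" .
  qed
  show ?thesis unfolding hausdorff_dist_def using 1 2 by simp
qed

lemma t_facts:
  fixes d :: nat and n :: nat
  assumes d: "d \<ge> 1" and n: "n \<ge> 3"
  shows "(ln (real n) / real n) powr (1/real d) > 0"
    and "((ln (real n) / real n) powr (1/real d)) ^ d = ln (real n) / real n"
    and "(real n / ln (real n)) powr (1/real d) * (ln (real n) / real n) powr (1/real d) = 1"
    and "ln (real n) \<ge> 1"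
proof -
  have "exp 1 \<le> real n" using exp_le n by linarith
  then show ln1: "ln (real n) \<ge> 1" using n by (subst ln_ge_iff) auto
  have q: "ln (real n) / real n > 0" using ln1 n by simp
  then show "(ln (real n) / real n) powr (1/real d) > 0" using ln1 n by simp
  show "((ln (real n) / real n) powr (1/real d)) ^ d = ln (real n) / real n"
  proof -
    have "((ln (real n) / real n) powr (1/real d)) ^ d = (ln (real n) / real n) powr (real d * (1/real d))"
      by (rule powr_power) (use q ln1 n in simp)
    also have "real d * (1/real d) = 1" using d by simp
    finally show ?thesis using q ln1 n by simp
  qed
  have "(real n / ln (real n)) powr (1/real d) * (ln (real n) / real n) powr (1/real d)
      = ((real n / ln (real n)) * (ln (real n) / real n)) powr (1/real d)"
    by (rule powr_mult[symmetric])
  also have "(real n / ln (real n)) * (ln (real n) / real n) = 1" using ln1 n by simp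
  finally show "(real n / ln (real n)) powr (1/real d) * (ln (real n) / real n) powr (1/real d) = 1" by simp
qed

lemma t_lim:
  fixes d :: nat assumes d: "d \<ge> 1"
  shows "(\<lambda>n::nat. (ln (real n) / real n) powr (1/real d)) \<longlonglongrightarrow> 0"
proof (rule tendsto_zero_powrI)
  show "(\<lambda>n::nat. ln (real n) / real n) \<longlonglongrightarrow> 0" by real_asymp
  show "(\<lambda>n::nat. 1 / real d) \<longlonglongrightarrow> 1 / real d" by simp
  show "\<forall>\<^sub>F n in sequentially. 0 \<le> ln (real n) / real n"
    using eventually_ge_at_top[of "1::nat"] by eventually_elim simp
  show "0 < 1 / real d" using d by simp
qed


lemma alg:
  fixes a l b p q K :: real
  assumes "a * p = inverse q"
  shows "K * (a / l) * (b * p) = K * (b / (q * l))"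
proof -
  have "K * (a / l) * (b * p) = K * b * (a * p) / l" by (simp add: algebra_simps)
  also have "\<dots> = K * b * inverse q / l" using assms by simp
  also have "\<dots> = K * (b / (q * l))" by (simp add: divide_inverse inverse_mult_distrib algebra_simps)
  finally show ?thesis .
qed

lemma eta_bound:
  fixes M :: "'s measure" and X :: "nat \<Rightarrow> 's \<Rightarrow> 'a::euclidean_space"
    and Pm :: "'a set \<Rightarrow> real" and \<alpha> :: "nat \<Rightarrow> real"
  assumes M: "prob_space M"
    and Xm: "\<And>i. i \<ge> 1 \<Longrightarrow> X i \<in> measurable M lborel"
    and SR: "S \<subseteq> cball 0 R" and R: "R \<ge> 0" and Sne: "S \<noteq> {}"
    and AES: "AE \<omega> in M. \<forall>i. i \<ge> 1 \<longrightarrow> X i \<omega> \<in> S"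
    and bound: "\<And>n B. n \<ge> 1 \<Longrightarrow> B \<in> sets borel \<Longrightarrow>
        measure M {\<omega>\<in>space M. \<forall>i\<in>{1..n}. X i \<omega> \<notin> B} \<le> (1 + \<alpha> n) * (1 - Pm B) ^ n"
    and Pm1: "\<And>B. Pm B \<le> 1"
    and stdb: "\<And>x r. x \<in> S \<Longrightarrow> 0 < r \<Longrightarrow> r \<le> lam \<Longrightarrow> Pm (ball x r) \<ge> \<delta> * w * r ^ DIM('a)"
    and a0: "\<And>n. n \<ge> 1 \<Longrightarrow> \<alpha> n \<ge> 0"
    and asum: "\<And>\<beta>::real. \<beta> > 1 \<Longrightarrow> summable (\<lambda>n. \<alpha> n / (real n powr \<beta> * ln (real n)))"
    and pos: "\<delta> > 0" "w > 0" "lam > 0" "\<eta> > 0"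
  shows "AE \<omega> in M. eventually (\<lambda>n. (real n / ln (real n)) powr (1 / real DIM('a))
            * hausdorff_dist ((\<lambda>i. X i \<omega>) ` {1..n}) S
          \<le> (2/(\<delta>*w)) powr (1/real DIM('a)) * (1 + 2*\<eta>)) sequentially"
proof -
  interpret prob_space M by (rule M)
  define d where "d = DIM('a)"
  have d1: "d \<ge> 1" unfolding d_def using DIM_positive[where 'a='a] by linarith
  define c where "c = (2/(\<delta>*w)) powr (1/real d)"
  have c0: "c > 0" using pos by (simp add: c_def)
  have cd: "c ^ d = 2/(\<delta>*w)"
  proof -
    have "c ^ d = (2/(\<delta>*w)) powr (real d * (1/real d))"
      unfolding c_def by (rule powr_power) (use pos in simp)
    also have "real d * (1/real d) = 1" using d1 by simp
    finally show ?thesis using pos by simp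
  qed
  define t where "t n = (ln (real n) / real n) powr (1/real d)" for n :: nat
  have tpos: "t n > 0" if "n \<ge> 3" for n unfolding t_def by (rule t_facts(1)[OF d1 that])
  have td: "t n ^ d = ln (real n) / real n" if "n \<ge> 3" for n unfolding t_def by (rule t_facts(2)[OF d1 that])
  have t1: "(real n / ln (real n)) powr (1/real d) * t n = 1" if "n \<ge> 3" for n
    unfolding t_def by (rule t_facts(3)[OF d1 that])
  have ln1: "ln (real n) \<ge> 1" if "n \<ge> 3" for n by (rule t_facts(4)[OF d1 that])
  have tlim: "t \<longlonglongrightarrow> 0" unfolding t_def using t_lim[OF d1] by simp
  define r where "r n = c*(1+\<eta>)*t n" for n
  define \<rho> where "\<rho> n = c*\<eta>*t n" for n
  have ev: "eventually (\<lambda>n. t n < min (lam/(c*(1+\<eta>))) (2/(c*\<eta>))) sequentially"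
    using order_tendstoD(2)[OF tlim, of "min (lam/(c*(1+\<eta>))) (2/(c*\<eta>))"] pos c0 by simp
  then obtain N1 where N1: "\<And>n. n \<ge> N1 \<Longrightarrow> t n < min (lam/(c*(1+\<eta>))) (2/(c*\<eta>))"
    by (auto simp: eventually_sequentially)
  define N0 where "N0 = max N1 3"
  have N0: "n \<ge> 3" "r n \<le> lam" "\<rho> n \<le> 2" "r n > 0" "\<rho> n > 0" if "n \<ge> N0" for n
  proof -
    show n3: "n \<ge> 3" using that by (simp add: N0_def)
    have "t n < lam/(c*(1+\<eta>))" "t n < 2/(c*\<eta>)" using N1[of n] that by (auto simp: N0_def)
    then show "r n \<le> lam" "\<rho> n \<le> 2" using c0 pos unfolding r_def \<rho>_def
      by (simp_all add: less_divide_eq mult.commute mult.left_commute less_imp_le)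
    show "r n > 0" "\<rho> n > 0" using c0 pos tpos[OF n3] unfolding r_def \<rho>_def by simp_all
  qed
  define C where "C n = (SOME C. finite C \<and> C \<subseteq> S \<and> S \<subseteq> (\<Union>z\<in>C. ball z (\<rho> n)) \<and>
           real (card C) * (\<rho> n/2) ^ DIM('a) \<le> (R+1) ^ DIM('a))" for n
  have Cprop: "finite (C n) \<and> C n \<subseteq> S \<and> S \<subseteq> (\<Union>z\<in>C n. ball z (\<rho> n)) \<and>
           real (card (C n)) * (\<rho> n/2) ^ DIM('a) \<le> (R+1) ^ DIM('a)" if "n \<ge> N0" for n
    unfolding C_def by (rule someI_ex[OF covering[OF SR R]]) (use N0[OF that] in auto)
  define E where "E n z = {\<omega>\<in>space M. \<forall>i\<in>{1..n}. X i \<omega> \<notin> ball z (r n)}" for n z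
  define A where "A n = (if n \<ge> N0 then \<Union>z\<in>C n. E n z else {})" for n
  have Esets: "E n z \<in> sets M" for n z
    unfolding E_def
  proof (rule sets.sets_Collect_finite_All)
    fix i assume "i \<in> {1..n}"
    then have "X i -` (- ball z (r n)) \<inter> space M \<in> sets M"
      using Xm[of i] by (intro measurable_sets[of _ _ lborel]) auto
    moreover have "{\<omega> \<in> space M. X i \<omega> \<notin> ball z (r n)} = X i -` (- ball z (r n)) \<inter> space M" by auto
    ultimately show "{\<omega> \<in> space M. X i \<omega> \<notin> ball z (r n)} \<in> sets M" by simp
  qed simp
  have Asets: "A n \<in> sets M" for n
    unfolding A_def using Cprop[of n] Esets by auto
  have Ebound: "measure M (E n z) \<le> (1 + \<alpha> n) * real n powr (-2*(1+\<eta>))" if n: "n \<ge> N0" and z: "z \<in> S" for n z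
  proof -
    note nn = N0[OF n]
    define q where "q = Pm (ball z (r n))"
    have "measure M (E n z) \<le> (1 + \<alpha> n) * (1 - q) ^ n"
      unfolding E_def q_def using nn by (intro bound) auto
    have rd: "r n ^ DIM('a) = 2/(\<delta>*w) * (1+\<eta>)^d * (ln (real n) / real n)"
      unfolding r_def d_def[symmetric] using cd td[OF nn(1)] by (simp add: power_mult_distrib)
    have "q \<ge> \<delta> * w * r n ^ DIM('a)" unfolding q_def using stdb[OF z nn(4) nn(2)] .
    also have "\<delta> * w * r n ^ DIM('a) = 2 * (1+\<eta>)^d * (ln (real n) / real n)"
      using rd pos by simp
    finally have q1: "q \<ge> 2 * (1+\<eta>)^d * (ln (real n) / real n)" .
    have pw: "(1+\<eta>)^1 \<le> (1+\<eta>)^d" using d1 pos by (intro power_increasing) auto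
    have m: "real n * q \<ge> real n * (2 * (1+\<eta>)^d * (ln (real n) / real n))"
      using q1 by (intro mult_left_mono) auto
    have eq: "real n * (2 * (1+\<eta>)^d * (ln (real n) / real n)) = 2 * (1+\<eta>)^d * ln (real n)"
      using nn(1) by simp
    have "2 * (1+\<eta>) * ln (real n) \<le> 2 * (1+\<eta>)^d * ln (real n)"
      using pw ln1[OF nn(1)] by (intro mult_right_mono) auto
    with m eq have q2: "real n * q \<ge> 2 * (1+\<eta>) * ln (real n)" by linarith
    have "(1 - q) ^ n \<le> exp (-q) ^ n"
      using Pm1[of "ball z (r n)"] exp_ge_add_one_self[of "-q"] unfolding q_def
      by (intro power_mono) auto
    also have "\<dots> = exp (- (real n * q))" by (simp add: exp_of_nat_mult[symmetric])
    also have "\<dots> \<le> exp (- (2 * (1+\<eta>) * ln (real n)))" using q2 by simp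
    also have "\<dots> = real n powr (-2*(1+\<eta>))" using nn(1) by (simp add: powr_def algebra_simps)
    finally have "(1 - q) ^ n \<le> real n powr (-2*(1+\<eta>))" .
    then have "(1 + \<alpha> n) * (1 - q) ^ n \<le> (1 + \<alpha> n) * real n powr (-2*(1+\<eta>))"
      using a0[of n] nn(1) by (intro mult_left_mono) auto
    with \<open>measure M (E n z) \<le> (1 + \<alpha> n) * (1 - q) ^ n\<close> show ?thesis by linarith
  qed
  define K where "K = ((R+1)/(c*\<eta>/2))^d"
  have cardb: "real (card (C n)) \<le> K * (real n / ln (real n))" if n: "n \<ge> N0" for n
  proof -
    note nn = N0[OF n]
    define L where "L = ln (real n) / real n"
    have L0: "L > 0" unfolding L_def using ln1[OF nn(1)] nn(1) by simp
    have cb: "real (card (C n)) * (\<rho> n/2)^d \<le> (R+1)^d" using Cprop[OF n] unfolding d_def by blast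
    have "(\<rho> n/2)^d = ((c*\<eta>/2) * t n)^d" unfolding \<rho>_def by (simp add: algebra_simps)
    also have "\<dots> = (c*\<eta>/2)^d * t n ^ d" by (rule power_mult_distrib)
    also have "\<dots> = (c*\<eta>/2)^d * L" using td[OF nn(1)] unfolding L_def by simp
    finally have "(\<rho> n/2)^d = (c*\<eta>/2)^d * L" .
    with cb have cb2: "real (card (C n)) * ((c*\<eta>/2)^d * L) \<le> (R+1)^d" by simp
    have p: "(c*\<eta>/2)^d * L > 0" using c0 pos L0 by simp
    have Kd: "K = (R+1)^d / (c*\<eta>/2)^d" unfolding K_def by (rule power_divide)
    have e1: "real n / ln (real n) = 1 / L" unfolding L_def by simp
    have "K * (real n / ln (real n)) = (R+1)^d / (c*\<eta>/2)^d * (1 / L)" unfolding Kd e1 ..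
    also have "\<dots> = (R+1)^d / ((c*\<eta>/2)^d * L)"
      by (simp only: divide_divide_eq_left times_divide_eq_right mult_1_right)
    finally have "K * (real n / ln (real n)) = (R+1)^d / ((c*\<eta>/2)^d * L)" .
    with cb2 p show ?thesis by (simp add: le_divide_eq)
  qed
  have Abound: "measure M (A n) \<le> K * ((1 + \<alpha> n) / (real n powr (1+2*\<eta>) * ln (real n)))"
    if n: "n \<ge> N0" for n
  proof -
    note nn = N0[OF n]
    have fin: "finite (C n)" and CS: "C n \<subseteq> S" using Cprop[OF n] by auto
    have "measure M (A n) = measure M (\<Union>z\<in>C n. E n z)" unfolding A_def using n by simp
    also have "\<dots> \<le> (\<Sum>z\<in>C n. measure M (E n z))"
      using fin Esets by (intro finite_measure_subadditive_finite) auto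
    also have "\<dots> \<le> (\<Sum>z\<in>C n. (1 + \<alpha> n) * real n powr (-2*(1+\<eta>)))"
      using CS by (intro sum_mono Ebound[OF n]) auto
    also have "\<dots> = real (card (C n)) * ((1 + \<alpha> n) * real n powr (-2*(1+\<eta>)))" by simp
    also have "\<dots> \<le> K * (real n / ln (real n)) * ((1 + \<alpha> n) * real n powr (-2*(1+\<eta>)))"
      using cardb[OF n] a0[of n] nn(1) by (intro mult_right_mono) auto
    also have "\<dots> = K * ((1 + \<alpha> n) / (real n powr (1+2*\<eta>) * ln (real n)))"
    proof -
      have "real n powr (-(1+2*\<eta>)) = real n powr (1 + -2*(1+\<eta>))" by (simp add: algebra_simps)
      also have "\<dots> = real n powr 1 * real n powr (-2*(1+\<eta>))" by (rule powr_add)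
      also have "\<dots> = real n * real n powr (-2*(1+\<eta>))" using nn(1) by simp
      finally have "real n * real n powr (-2*(1+\<eta>)) = inverse (real n powr (1+2*\<eta>))"
        by (simp only: powr_minus)
      then show ?thesis by (rule alg)
    qed
    finally show ?thesis .
  qed
  define \<beta> where "\<beta> = 1 + 2*\<eta>"
  have \<beta>1: "\<beta> > 1" using pos unfolding \<beta>_def by simp
  have s1: "summable (\<lambda>n. 1 / (real n powr \<beta> * ln (real n)))"
  proof (rule summable_comparison_test'[of "\<lambda>n. real n powr (-\<beta>)" 3])
    show "summable (\<lambda>n. real n powr (-\<beta>))" using \<beta>1 by (subst summable_real_powr_iff) simp
    fix n :: nat assume "n \<ge> 3"
    then have l: "ln (real n) \<ge> 1" and np: "real n powr \<beta> > 0" using ln1 by auto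
    have "1 / (real n powr \<beta> * ln (real n)) \<le> 1 / (real n powr \<beta>)"
      using l np \<open>n \<ge> 3\<close> by (intro divide_left_mono mult_pos_pos) auto
    then show "norm (1 / (real n powr \<beta> * ln (real n))) \<le> real n powr (-\<beta>)"
      using l np by (simp add: powr_minus divide_inverse)
  qed
  have s2: "summable (\<lambda>n. K * (1 / (real n powr \<beta> * ln (real n))) + K * (\<alpha> n / (real n powr \<beta> * ln (real n))))"
    by (intro summable_add summable_mult s1 asum \<beta>1)
  have summ: "summable (\<lambda>n. measure M (A n))"
  proof (rule summable_comparison_test'[OF s2, of N0])
    fix n assume n: "n \<ge> N0"
    have "norm (measure M (A n)) = measure M (A n)" by simp
    also have "\<dots> \<le> K * ((1 + \<alpha> n) / (real n powr \<beta> * ln (real n)))" using Abound[OF n] unfolding \<beta>_def .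
    also have "\<dots> = K * (1 / (real n powr \<beta> * ln (real n))) + K * (\<alpha> n / (real n powr \<beta> * ln (real n)))"
      by (simp add: add_divide_distrib distrib_left)
    finally show "norm (measure M (A n)) \<le> K * (1 / (real n powr \<beta> * ln (real n))) + K * (\<alpha> n / (real n powr \<beta> * ln (real n)))" .
  qed
  have BC: "AE \<omega> in M. eventually (\<lambda>n. \<omega> \<in> space M - A n) sequentially"
    by (rule borel_cantelli_AE1[OF Asets]) (simp_all add: summ less_top[symmetric])
  show ?thesis using BC AES
  proof eventually_elim
    case (elim \<omega>)
    note ev = elim(1) and xs = elim(2)
    show ?case using ev eventually_ge_at_top[of N0]
    proof eventually_elim
      case (elim n)
      note nn = N0[OF elim(2)]
      have om: "\<omega> \<in> space M" "\<omega> \<notin> (\<Union>z\<in>C n. E n z)" using elim unfolding A_def by auto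
      have hit: "\<forall>z\<in>C n. \<exists>i\<in>{1..n}. X i \<omega> \<in> ball z (r n)" using om unfolding E_def by auto
      have "hausdorff_dist ((\<lambda>i. X i \<omega>) ` {1..n}) S \<le> r n + \<rho> n"
        by (rule hd_bound[where C="C n"]) (use xs nn Sne Cprop[OF elim(2)] hit in auto)
      also have "r n + \<rho> n = c * (1 + 2*\<eta>) * t n" unfolding r_def \<rho>_def by (simp add: algebra_simps)
      finally have h: "hausdorff_dist ((\<lambda>i. X i \<omega>) ` {1..n}) S \<le> c * (1 + 2*\<eta>) * t n" .
      have "(real n / ln (real n)) powr (1/real d) * hausdorff_dist ((\<lambda>i. X i \<omega>) ` {1..n}) S
          \<le> (real n / ln (real n)) powr (1/real d) * (c * (1 + 2*\<eta>) * t n)"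
        using h by (intro mult_left_mono) auto
      also have "\<dots> = c * (1 + 2*\<eta>) * ((real n / ln (real n)) powr (1/real d) * t n)" by simp
      also have "\<dots> = c * (1 + 2*\<eta>)" using t1[OF nn(1)] by simp
      finally show ?case unfolding c_def d_def .
    qed
  qed
qed


theorem mainTheorem4:
  fixes M :: "'s measure"
    and X :: "nat \<Rightarrow> 's \<Rightarrow> 'a::euclidean_space"
    and f :: "'a \<Rightarrow> real"
    and g :: "nat \<Rightarrow> (nat \<Rightarrow> 'a) \<Rightarrow> real"
    and \<alpha> :: "nat \<Rightarrow> real"
    and S :: "'a set"
    and \<delta> lam :: real
  assumes "prob_space M"
    and "compact S"
    and f_nonneg: "\<And>x. f x \<ge> 0"
    and marg: "\<And>i. i \<ge> 1 \<Longrightarrow> distributed M lborel (X i) (\<lambda>x. ennreal (f x))"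
    and g_nonneg: "\<And>n x. g n x \<ge> 0"
    and joint: "\<And>n. n \<ge> 1 \<Longrightarrow>
       distributed M (PiM {1..n} (\<lambda>_. lborel)) (\<lambda>\<omega>. \<lambda>i\<in>{1..n}. X i \<omega>) (\<lambda>x. ennreal (g n x))"
    and AI: "\<And>n. n \<ge> 1 \<Longrightarrow> AI_cond n (g n) f (\<alpha> n)"
    and supp: "measure_support (distr M lborel (X 1)) = S"
    and "\<delta> > 0" and "lam > 0"
    and std: "standard_set S (distr M lborel (X 1)) \<delta> lam"
    and alpha_sum: "\<And>\<beta>::real. \<beta> > 1 \<Longrightarrow> summable (\<lambda>n. \<alpha> n / (real n powr \<beta> * ln (real n)))"
  shows "AE \<omega> in M.
    limsup (\<lambda>n. ereal ((real n / ln (real n)) powr (1 / real DIM('a))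
                  * hausdorff_dist ((\<lambda>i. X i \<omega>) ` {1..n}) S))
      \<le> ereal ((2 / (\<delta> * unit_ball_vol TYPE('a))) powr (1 / real DIM('a)))"
proof -
  note M = \<open>prob_space M\<close>
  interpret prob_space M by (rule M)
  define P where "P = distr M lborel (X 1)"
  define w where "w = unit_ball_vol TYPE('a)"
  have w0: "w > 0" unfolding w_def unit_ball_vol_def by (rule content_ball_pos) simp
  have Xm: "X i \<in> measurable M lborel" if "i \<ge> 1" for i
    using distributed_measurable[OF marg[OF that]] .
  have Pd: "P = density lborel (\<lambda>x. ennreal (f x))"
    unfolding P_def using distributed_distr_eq_density[OF marg[of 1]] by simp
  have distr_eq: "distr M lborel (X i) = P" if "i \<ge> 1" for i
    using distributed_distr_eq_density[OF marg[OF that]] Pd by simp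
  interpret P: prob_space P unfolding P_def using prob_space_distr[OF Xm[of 1]] by simp
  have sP: "sets P = sets borel" unfolding P_def by simp
  have AEP: "AE x in P. x \<in> S" using support_AE[OF sP] supp unfolding P_def by simp
  have AES: "AE \<omega> in M. \<forall>i. i \<ge> 1 \<longrightarrow> X i \<omega> \<in> S"
  proof (subst AE_all_countable, intro allI)
    fix i :: nat
    show "AE \<omega> in M. i \<ge> 1 \<longrightarrow> X i \<omega> \<in> S"
    proof (cases "i \<ge> 1")
      case True
      have "AE x in distr M lborel (X i). x \<in> S" unfolding distr_eq[OF True] by (rule AEP)
      then have "AE \<omega> in M. X i \<omega> \<in> S" by (rule AE_distrD[OF Xm[OF True]])
      then show ?thesis by simp
    qed simp
  qed
  have Sne: "S \<noteq> {}"
  proof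
    assume "S = {}"
    then have "AE x in P. False" using AEP by simp
    then show False using P.AE_False by simp
  qed
  obtain a where a: "\<forall>x\<in>S. norm x \<le> a" using compact_imp_bounded[OF \<open>compact S\<close>] bounded_iff by blast
  define R where "R = max a 0"
  have SR: "S \<subseteq> cball 0 R" and R: "R \<ge> 0" using a unfolding R_def by auto
  have a0: "\<alpha> n \<ge> 0" if n: "n \<ge> 1" for n
  proof -
    have "\<exists>x0. f x0 > 0"
    proof (rule ccontr)
      assume "\<not> (\<exists>x0. f x0 > 0)"
      then have "\<And>x. f x = 0" using f_nonneg by (metis less_eq_real_def)
      then have "emeasure P (space P) = 0" unfolding Pd by (simp add: emeasure_density)
      then show False using P.emeasure_space_1 by simp
    qed
    then obtain x0 where x0: "f x0 > 0" by blast
    define xx where "xx = (\<lambda>i\<in>{1..n}. x0)"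
    have xe: "xx \<in> extensional {1..n}" unfolding xx_def by simp
    have "(\<Prod>i\<in>{1..n}. f (xx i)) = (\<Prod>i\<in>{1..n}. f x0)" unfolding xx_def by (intro prod.cong) auto
    then have pp: "(\<Prod>i\<in>{1..n}. f (xx i)) > 0" using x0 by simp
    have "\<bar>g n xx - (\<Prod>i\<in>{1..n}. f (xx i))\<bar> / (\<Prod>i\<in>{1..n}. f (xx i)) \<le> \<alpha> n"
      using AI[OF n] xe pp unfolding AI_cond_def Let_def by blast
    moreover have "\<bar>g n xx - (\<Prod>i\<in>{1..n}. f (xx i))\<bar> / (\<Prod>i\<in>{1..n}. f (xx i)) \<ge> 0" using pp by simp
    ultimately show ?thesis by linarith
  qed
  have bound: "measure M {\<omega>\<in>space M. \<forall>i\<in>{1..n}. X i \<omega> \<notin> B} \<le> (1 + \<alpha> n) * (1 - measure P B) ^ n"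
    if n: "n \<ge> 1" and B: "B \<in> sets borel" for n B
  proof -
    have "emeasure M {\<omega>\<in>space M. \<forall>i\<in>{1..n}. X i \<omega> \<notin> B}
          \<le> ennreal ((1 + \<alpha> n) * (1 - measure (density lborel f) B) ^ n)"
      by (rule joint_bound[OF M f_nonneg marg[of 1] joint[OF n] AI[OF n] B]) (use a0[OF n] in simp_all)
    also have "density lborel f = P" using Pd by simp
    finally have e: "emeasure M {\<omega>\<in>space M. \<forall>i\<in>{1..n}. X i \<omega> \<notin> B} \<le> ennreal ((1 + \<alpha> n) * (1 - measure P B) ^ n)" .
    have nn: "(1 + \<alpha> n) * (1 - measure P B) ^ n \<ge> 0" using a0[OF n] P.prob_le_1[of B] by simp
    show ?thesis using e nn by (simp add: emeasure_eq_measure)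
  qed
  have stdb: "measure P (ball x r) \<ge> \<delta> * w * r ^ DIM('a)" if x: "x \<in> S" and r: "0 < r" "r \<le> lam" for x r
  proof -
    have "measure P (ball x r \<inter> S) \<ge> \<delta> * measure lborel (ball x r)"
      using std x r unfolding standard_set_def P_def by blast
    moreover have "measure lborel (ball x r) = r ^ DIM('a) * w"
      unfolding w_def unit_ball_vol_def using content_ball_conv_unit_ball[of r x] r by simp
    moreover have "measure P (ball x r \<inter> S) \<le> measure P (ball x r)"
      by (rule P.finite_measure_mono) (auto simp: sP)
    ultimately show ?thesis by (simp add: algebra_simps)
  qed
  define c where "c = (2 / (\<delta> * w)) powr (1 / real DIM('a))"
  define u where "u \<omega> n = (real n / ln (real n)) powr (1 / real DIM('a)) * hausdorff_dist ((\<lambda>i. X i \<omega>) ` {1..n}) S" for \<omega> n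
  have each: "AE \<omega> in M. eventually (\<lambda>n. u \<omega> n \<le> c * (1 + 2 * (1 / real (Suc k)))) sequentially" for k :: nat
    unfolding u_def c_def
    by (rule eta_bound[where lam=lam and \<delta>=\<delta> and w=w and \<eta>="1 / real (Suc k)", OF M Xm SR R Sne AES bound P.prob_le_1 stdb a0 alpha_sum])
       (use \<open>\<delta> > 0\<close> w0 \<open>lam > 0\<close> in auto)
  have "AE \<omega> in M. \<forall>k::nat. eventually (\<lambda>n. u \<omega> n \<le> c * (1 + 2 * (1 / real (Suc k)))) sequentially"
    using each by (subst AE_all_countable) simp
  then show ?thesis
  proof eventually_elim
    case (elim \<omega>)
    have lk: "limsup (\<lambda>n. ereal (u \<omega> n)) \<le> ereal (c * (1 + 2 * (1 / real (Suc k))))" for k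
      by (rule Limsup_bounded) (use elim[rule_format, of k] in \<open>auto elim: eventually_mono\<close>)
    have lim: "(\<lambda>k. ereal (c * (1 + 2 * (1 / real (Suc k))))) \<longlonglongrightarrow> ereal (c * (1 + 2 * 0))"
      unfolding lim_ereal
      by (intro tendsto_intros LIMSEQ_Suc[OF lim_1_over_n])
    have "limsup (\<lambda>n. ereal (u \<omega> n)) \<le> ereal (c * (1 + 2 * 0))"
      by (rule LIMSEQ_le_const[OF lim]) (use lk in auto)
    then show ?case unfolding u_def c_def w_def by simp
  qed
qed

end
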